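(* Let $\mu\in(0,1)$. For any $t_{\rm r}>0$, the equation $$\Big(\mu t_{\rm r}+\sqrt{1+t_{\rm r}^2-2t_{\rm r}\cos\theta}\Big)\cos\theta-\mu=0$$ has a unique solution $\theta=\theta_{\rm exit}$ in the interval $[\cos^{-1}\mu,\ \tfrac{\pi}{2}]$. Furthermore, $\theta_{\rm exit}\to\tfrac{\pi}{2}$ as $t_{\rm r}\to\infty$. *)

theory Defs
  imports "HOL-Analysis.Analysis"
begin

definition exit_eq :: "real \<Rightarrow> real \<Rightarrow> real \<Rightarrow> real" where
  "exit_eq \<mu> t \<theta> = (\<mu> * t + sqrt (1 + t^2 - 2 * t * cos \<theta>)) * cos \<theta> - \<mu>"

definition theta_exit :: "real \<Rightarrow> real \<Rightarrow> real" where
  "theta_exit \<mu> t = (THE \<theta>. \<theta> \<in> {arccos \<mu>..pi/2} \<and> exit_eq \<mu> t \<theta> = 0)"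

end

theory Submission imports Defs begin

lemma cubic_fact:
  fixes a b d e c1 c2 x :: real
  assumes "a*c1^3+b*c1^2+d*c1+e = 0" "a*c2^3+b*c2^2+d*c2+e = 0" "c1 \<noteq> c2"
  shows "a*x^3+b*x^2+d*x+e = (x-c1)*(x-c2)*(a*(x+c1+c2)+b)"
proof -
  have h: "d = - (a*(c1^2+c1*c2+c2^2) + b*(c1+c2))"
  proof -
    have "(c1-c2)*(a*(c1^2+c1*c2+c2^2) + b*(c1+c2) + d) = 0"
      using assms(1,2) by (simp add: algebra_simps power3_eq_cube power2_eq_square)
    then show ?thesis using assms(3) by simp
  qed
  have e: "e = -(a*c1^3+b*c1^2+d*c1)" using assms(1) by simp
  show ?thesis unfolding e h by (simp add: algebra_simps power3_eq_cube power2_eq_square)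
qed

lemma P_root:
  fixes \<mu> t c :: real
  assumes "c * (\<mu>*t + sqrt (1+t^2-2*t*c)) = \<mu>" "0 < c" "c < 1" "t > 0"
  shows "(-2*t)*c^3 + (1+t^2-\<mu>^2*t^2)*c^2 + (2*\<mu>^2*t)*c + (- (\<mu>^2)) = 0"
proof -
  have S: "1+t^2-2*t*c \<ge> 0"
  proof -
    have "2*t*c \<le> 2*t" using assms by simp
    moreover have "(1-t)^2 \<ge> 0" by simp
    ultimately show ?thesis by (simp add: power2_eq_square algebra_simps)
  qed
  have "c * sqrt (1+t^2-2*t*c) = \<mu> - \<mu>*t*c" using assms(1) by (simp add: algebra_simps)
  then have "(c * sqrt (1+t^2-2*t*c))^2 = (\<mu> - \<mu>*t*c)^2" by simp
  then have "c^2 * (1+t^2-2*t*c) = (\<mu> - \<mu>*t*c)^2" using S by (simp add: power_mult_distrib)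
  then show ?thesis by (simp add: algebra_simps power3_eq_cube power2_eq_square)
qed

lemma uniq_c:
  fixes \<mu> t c1 c2 :: real
  assumes mu: "0 < \<mu>" "\<mu> < 1" and t: "t > 0"
    and c1: "0 < c1" "c1 \<le> \<mu>" and c2: "0 < c2" "c2 \<le> \<mu>"
    and e1: "c1 * (\<mu>*t + sqrt (1+t^2-2*t*c1)) = \<mu>"
    and e2: "c2 * (\<mu>*t + sqrt (1+t^2-2*t*c2)) = \<mu>"
  shows "c1 = c2"
proof (rule ccontr)
  assume ne: "c1 \<noteq> c2"
  define a where "a = -2*t"
  define b where "b = 1+t^2-\<mu>^2*t^2"
  define d where "d = 2*\<mu>^2*t"
  define e where "e = - (\<mu>^2)"
  have p1: "a*c1^3+b*c1^2+d*c1+e = 0" unfolding a_def b_def d_def e_def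
    using P_root[OF e1] c1 mu t by simp
  have p2: "a*c2^3+b*c2^2+d*c2+e = 0" unfolding a_def b_def d_def e_def
    using P_root[OF e2] c2 mu t by simp
  note F = cubic_fact[OF p1 p2 ne]
  have "e = c1*c2*(a*(c1+c2)+b)" using F[of 0] by simp
  moreover have "e < 0" using mu unfolding e_def by simp
  ultimately have "c1*c2*(a*(c1+c2)+b) < 0" by simp
  then have neg: "a*(c1+c2)+b < 0" using c1 c2
    by (smt (verit) mult_pos_pos mult_nonneg_nonneg)
  have "a*\<mu> < 0" unfolding a_def using t mu by simp
  then have neg2: "a*(\<mu>+c1+c2)+b < 0" using neg by (simp add: algebra_simps)
  have "(\<mu>-c1)*(\<mu>-c2) \<ge> 0" using c1 c2 by simp
  then have le: "(\<mu>-c1)*(\<mu>-c2)*(a*(\<mu>+c1+c2)+b) \<le> 0"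
    using neg2 by (simp add: mult_nonneg_nonpos)
  have "a*\<mu>^3+b*\<mu>^2+d*\<mu>+e = \<mu>^2*(t^2 - \<mu>^2*t^2)"
    unfolding a_def b_def d_def e_def by (simp add: algebra_simps power3_eq_cube power2_eq_square)
  moreover have "\<mu>^2*(t^2 - \<mu>^2*t^2) > 0"
  proof -
    have "\<mu>^2 < 1" using mu by (simp add: power_less_one_iff abs_less_iff)
    then have "\<mu>^2*t^2 < t^2" using t by simp
    then show ?thesis using mu by simp
  qed
  ultimately show False using le F[of \<mu>] by simp
qed


lemma cos_range:
  fixes \<mu> \<theta> :: real
  assumes "0 < \<mu>" "\<mu> < 1" "\<theta> \<in> {arccos \<mu>..pi/2}"
  shows "0 \<le> cos \<theta> \<and> cos \<theta> \<le> \<mu> \<and> 0 \<le> \<theta> \<and> \<theta> \<le> pi"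
proof -
  have a0: "0 \<le> arccos \<mu>" using assms by (intro arccos_lbound) auto
  have "cos \<theta> \<le> cos (arccos \<mu>)"
    using assms a0 by (intro cos_monotone_0_pi_le) auto
  moreover have "cos (arccos \<mu>) = \<mu>" using assms by (intro cos_arccos) auto
  moreover have "0 \<le> cos \<theta>" using assms a0 by (intro cos_ge_zero) auto
  ultimately show ?thesis using assms a0 by auto
qed

lemma root_prop:
  fixes \<mu> t \<theta> :: real
  assumes "0 < \<mu>" "\<mu> < 1" "\<theta> \<in> {arccos \<mu>..pi/2}" "exit_eq \<mu> t \<theta> = 0"
  shows "0 < cos \<theta> \<and> cos \<theta> \<le> \<mu> \<and>
     cos \<theta> * (\<mu>*t + sqrt (1+t^2-2*t*cos \<theta>)) = \<mu>"
proof -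
  have r: "0 \<le> cos \<theta> \<and> cos \<theta> \<le> \<mu>" using cos_range[OF assms(1-3)] by auto
  have e: "cos \<theta> * (\<mu>*t + sqrt (1+t^2-2*t*cos \<theta>)) = \<mu>"
    using assms(4) unfolding exit_eq_def by (simp add: algebra_simps)
  have "cos \<theta> \<noteq> 0" using e assms(1) by auto
  then show ?thesis using r e by auto
qed

theorem proposition1:
  fixes \<mu> :: real
  assumes "0 < \<mu>" and "\<mu> < 1"
  shows "(\<forall>t::real. t > 0 \<longrightarrow>
            (\<exists>!\<theta>. \<theta> \<in> {arccos \<mu>..pi/2} \<and> exit_eq \<mu> t \<theta> = 0))
       \<and> ((\<lambda>t. theta_exit \<mu> t) \<longlongrightarrow> pi/2) at_top"
proof -
  have EU: "\<exists>!\<theta>. \<theta> \<in> {arccos \<mu>..pi/2} \<and> exit_eq \<mu> t \<theta> = 0" if t: "t > 0" for t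
  proof -
    have a2: "arccos \<mu> \<le> pi/2" using assms by (intro arccos_le_pi2) auto
    have cm: "cos (arccos \<mu>) = \<mu>" using assms by (intro cos_arccos) auto
    have Spos: "0 < 1+t^2-2*t*\<mu>"
    proof -
      have "2*t*\<mu> < 2*t" using t assms by simp
      moreover have "(1-t)^2 \<ge> 0" by simp
      ultimately show ?thesis by (simp add: power2_eq_square algebra_simps)
    qed
    have gt1: "\<mu>*t + sqrt (1+t^2-2*t*\<mu>) > 1"
    proof (cases "\<mu>*t \<ge> 1")
      case True
      have "0 < sqrt (1+t^2-2*t*\<mu>)" using Spos by simp
      then show ?thesis using True by linarith
    next
      case False
      have "\<mu>^2 < 1" using assms by (simp add: power_less_one_iff abs_less_iff)
      then have "\<mu>^2*t^2 < t^2" using t by simp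
      then have "(1-\<mu>*t)^2 < 1+t^2-2*t*\<mu>" by (simp add: power2_eq_square algebra_simps)
      then have "1-\<mu>*t < sqrt (1+t^2-2*t*\<mu>)" by (rule real_less_rsqrt)
      then show ?thesis by simp
    qed
    have f1: "exit_eq \<mu> t (arccos \<mu>) \<ge> 0"
    proof -
      have "\<mu> * 1 \<le> \<mu> * (\<mu>*t + sqrt (1+t^2-2*t*\<mu>))" using gt1 assms
        by (intro mult_left_mono) auto
      then show ?thesis unfolding exit_eq_def cm by (simp add: algebra_simps)
    qed
    have f2: "exit_eq \<mu> t (pi/2) \<le> 0" unfolding exit_eq_def using assms by simp
    have "continuous_on {arccos \<mu>..pi/2} (\<lambda>\<theta>. exit_eq \<mu> t \<theta>)"
      unfolding exit_eq_def by (intro continuous_intros)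
    then obtain \<theta> where "\<theta> \<in> {arccos \<mu>..pi/2}" "exit_eq \<mu> t \<theta> = 0"
      using IVT2'[of "\<lambda>\<theta>. exit_eq \<mu> t \<theta>" "pi/2" 0 "arccos \<mu>"] f1 f2 a2 by auto
    moreover have "\<theta>1 = \<theta>2" if h1: "\<theta>1 \<in> {arccos \<mu>..pi/2}" "exit_eq \<mu> t \<theta>1 = 0"
      and h2: "\<theta>2 \<in> {arccos \<mu>..pi/2}" "exit_eq \<mu> t \<theta>2 = 0" for \<theta>1 \<theta>2
    proof -
      note p1 = root_prop[OF assms h1] and p2 = root_prop[OF assms h2]
      have "cos \<theta>1 = cos \<theta>2" using uniq_c[OF assms t] p1 p2 by blast
      then have "arccos (cos \<theta>1) = arccos (cos \<theta>2)" by simp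
      then show ?thesis using cos_range[OF assms h1(1)] cos_range[OF assms h2(1)]
        by (simp add: arccos_cos)
    qed
    ultimately show ?thesis by blast
  qed
  define c where "c t = cos (theta_exit \<mu> t)" for t
  have P: "theta_exit \<mu> t \<in> {arccos \<mu>..pi/2} \<and> exit_eq \<mu> t (theta_exit \<mu> t) = 0"
    if "t > 0" for t
    unfolding theta_exit_def using theI'[OF EU[OF that]] .
  have ev1: "eventually (\<lambda>t. 0 \<le> c t) at_top"
    using eventually_gt_at_top[of 0]
  proof eventually_elim
    case (elim t)
    show ?case using root_prop[OF assms conjunct1[OF P[OF elim]] conjunct2[OF P[OF elim]]]
      unfolding c_def by simp
  qed
  have ev2: "eventually (\<lambda>t. c t \<le> inverse t) at_top"
    using eventually_gt_at_top[of 0]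
  proof eventually_elim
    case (elim t)
    have r: "0 < c t" "c t * (\<mu>*t + sqrt (1+t^2-2*t*c t)) = \<mu>" "c t \<le> \<mu>"
      using root_prop[OF assms conjunct1[OF P[OF elim]] conjunct2[OF P[OF elim]]] unfolding c_def by auto
    have "0 \<le> 1+t^2-2*t*c t"
    proof -
      have "2*t*c t \<le> 2*t" using r assms elim by simp
      moreover have "(1-t)^2 \<ge> 0" by simp
      ultimately show ?thesis by (simp add: power2_eq_square algebra_simps)
    qed
    then have "c t * (\<mu>*t) \<le> c t * (\<mu>*t + sqrt (1+t^2-2*t*c t))"
      using r by (intro mult_left_mono) auto
    then have "c t * (\<mu>*t) \<le> \<mu>" using r(2) by linarith
    then have "\<mu> * (c t * t) \<le> \<mu> * 1" by (simp add: algebra_simps)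
    then have "c t * t \<le> 1" using assms(1) mult_le_cancel_left_pos[of \<mu> "c t * t" 1] by linarith
    then show ?case using elim by (simp add: field_simps)
  qed
  have "(c \<longlongrightarrow> 0) at_top"
    by (rule tendsto_sandwich[OF ev1 ev2]) (auto intro: tendsto_inverse_0_at_top filterlim_ident)
  then have "((\<lambda>t. arccos (c t)) \<longlongrightarrow> arccos 0) at_top"
    by (intro isCont_tendsto_compose[OF isCont_arccos]) auto
  moreover have "eventually (\<lambda>t. arccos (c t) = theta_exit \<mu> t) at_top"
    using eventually_gt_at_top[of 0]
  proof eventually_elim
    case (elim t)
    have "0 \<le> theta_exit \<mu> t \<and> theta_exit \<mu> t \<le> pi"
      using cos_range[OF assms conjunct1[OF P[OF elim]]] by simp
    then show ?case unfolding c_def by (simp add: arccos_cos)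
  qed
  ultimately have "((\<lambda>t. theta_exit \<mu> t) \<longlongrightarrow> pi/2) at_top"
    using Lim_transform_eventually[of "\<lambda>t. arccos (c t)" "arccos 0" at_top "theta_exit \<mu>"] by simp
  then show ?thesis using EU by blast
qed

end
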